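(* Let $\mu\in\Delta_q$ and $\delta\in(0,1]$. Let $\mathcal R(\mu,\delta)$ be the set of seeds $r=((x_1,p_1),(x_2,p_2),\dots)$ such that $p_{i^*}\ge(1-\delta)\mu(x_{i^*})$, where $i^*=\min\{i: p_i\le\mu(x_i)\}$. Then for every $\upsilon\in\Delta_q$, $$\mathbb P_{r\sim\mathcal R(\mu,\delta)}\big[\mathrm{MinCoupler}(\mu,r)\ne\mathrm{MinCoupler}(\upsilon,r)\big]\ge\frac{1-\upsilon_{\max}}{2}\cdot\mathbb P_{x\sim\mu}\big[\upsilon(x)<(1-\delta)\mu(x)\big],$$ where $\upsilon_{\max}=\max_{x\in[q]}\upsilon(x)$ and $r\sim\mathcal R(\mu,\delta)$ denotes a uniformly random seed conditioned on lying in $\mathcal R(\mu,\delta)$.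
   Context: $\Delta_q$ is the probability simplex on $[q]$. A uniformly random seed is an infinite sequence of i.i.d. pairs $(x_k,p_k)$ with $x_k$ uniform on $[q]$ and $p_k$ uniform on $[0,1]$, independent. $\mathrm{MinCoupler}(\nu,r)$ outputs $x_{i^*}$ with $i^*=\min\{k: p_k\le\nu(x_k)\}$. *)

theory Defs
  imports "HOL-Probability.Probability"
begin

definition in_simplex :: "nat \<Rightarrow> (nat \<Rightarrow> real) \<Rightarrow> bool" where
  "in_simplex q \<mu> \<longleftrightarrow> (\<forall>x\<in>{1..q}. 0 \<le> \<mu> x) \<and> (\<Sum>x\<in>{1..q}. \<mu> x) = 1"

type_synonym seed = "nat \<Rightarrow> nat \<times> real"

definition seed_space :: "nat \<Rightarrow> seed measure" where
  "seed_space q = (\<Pi>\<^sub>M k\<in>UNIV. uniform_count_measure {1..q} \<Otimes>\<^sub>M uniform_measure lborel {0..1::real})"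

definition istar :: "(nat \<Rightarrow> real) \<Rightarrow> seed \<Rightarrow> nat" where
  "istar \<nu> r = (LEAST k. snd (r k) \<le> \<nu> (fst (r k)))"

definition MinCoupler :: "(nat \<Rightarrow> real) \<Rightarrow> seed \<Rightarrow> nat" where
  "MinCoupler \<nu> r = fst (r (istar \<nu> r))"

definition Rset :: "(nat \<Rightarrow> real) \<Rightarrow> real \<Rightarrow> seed set" where
  "Rset \<mu> \<delta> = {r. snd (r (istar \<mu> r)) \<ge> (1 - \<delta>) * \<mu> (fst (r (istar \<mu> r)))}"

definition cond_prob :: "'a measure \<Rightarrow> 'a set \<Rightarrow> 'a set \<Rightarrow> real" where
  "cond_prob M A B = measure M (A \<inter> B \<inter> space M) / measure M (B \<inter> space M)"

end

theory Submission imports Defs begin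

definition Dm :: "nat \<Rightarrow> (nat \<times> real) measure" where
  "Dm q = uniform_count_measure {1..q} \<Otimes>\<^sub>M uniform_measure lborel {0..1::real}"

lemma seed_space_Dm: "seed_space q = (\<Pi>\<^sub>M k\<in>UNIV. Dm q)"
  by (simp add: seed_space_def Dm_def)

lemma prob_UC: "q \<ge> 1 \<Longrightarrow> prob_space (uniform_count_measure {1..q::nat})"
  by (rule prob_space_uniform_count_measure) auto

lemma prob_U: "prob_space (uniform_measure lborel {0..1::real})"
  by (rule prob_space_uniform_measure) auto

lemma prob_Dm: "q \<ge> 1 \<Longrightarrow> prob_space (Dm q)"
  unfolding Dm_def
  by (intro prob_space_pair prob_UC prob_U)

lemma pps: "q \<ge> 1 \<Longrightarrow> product_prob_space (\<lambda>_. Dm q)"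
  using prob_Dm by (simp add: product_prob_space_def product_prob_space_axioms_def product_sigma_finite_def
     prob_space_imp_sigma_finite)

lemma sets_Dm: "sets (Dm q) = sets (count_space {1..q} \<Otimes>\<^sub>M (lborel::real measure))"
  unfolding Dm_def by (intro sets_pair_measure_cong) (auto simp: sets_uniform_count_measure)

lemma space_Dm: "space (Dm q) = {1..q} \<times> UNIV"
  unfolding Dm_def by (simp add: space_pair_measure space_uniform_count_measure)

lemma SigmaI_sets:
  assumes "Y \<subseteq> {1..q}" "\<And>y. y \<in> Y \<Longrightarrow> I y \<in> sets borel"
  shows "(\<Union>y\<in>Y. {y} \<times> I y) \<in> sets (Dm q)"
proof -
  have "finite Y" using assms(1) finite_subset by blast
  then show ?thesis unfolding sets_Dm using assms
    by (intro sets.finite_UN) (auto intro!: pair_measureI)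
qed

lemma measure_Sigma:
  assumes q: "q \<ge> 1" and Y: "Y \<subseteq> {1..q}" and I: "\<And>y. y \<in> Y \<Longrightarrow> I y \<in> sets borel"
  shows "measure (Dm q) (\<Union>y\<in>Y. {y} \<times> I y) = (\<Sum>y\<in>Y. measure lborel ({0..1} \<inter> I y)) / q"
proof -
  interpret D: prob_space "Dm q" using prob_Dm[OF q] .
  interpret U: prob_space "uniform_measure lborel {0..1::real}" by (rule prob_U)
  have fin: "finite Y" using Y finite_subset by blast
  have "measure (Dm q) (\<Union>y\<in>Y. {y} \<times> I y) = (\<Sum>y\<in>Y. measure (Dm q) ({y} \<times> I y))"
    using fin Y I
    by (intro measure_finite_Union) (auto simp: disjoint_family_on_def sets_Dm intro!: pair_measureI)
  also have "\<dots> = (\<Sum>y\<in>Y. measure lborel ({0..1} \<inter> I y) / q)"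
  proof (intro sum.cong refl)
    fix y assume y: "y \<in> Y"
    have "emeasure (Dm q) ({y} \<times> I y) = emeasure (uniform_count_measure {1..q}) {y} * emeasure (uniform_measure lborel {0..1::real}) (I y)"
      unfolding Dm_def using y Y I
      by (intro U.emeasure_pair_measure_Times) (auto simp: sets_uniform_count_measure)
    also have "\<dots> = ennreal (1 / q) * ennreal (measure lborel ({0..1} \<inter> I y))"
    proof -
      have yq: "{y} \<subseteq> {1..q}" using y Y by auto
      have a: "emeasure (uniform_count_measure {1..q}) {y} = ennreal (1 / q)"
        using emeasure_uniform_count_measure[OF _ yq] q by (simp add: ennreal_of_nat_eq_real_of_nat divide_ennreal)
      have fl: "emeasure lborel ({0..1} \<inter> I y) \<noteq> \<infinity>"
      proof -
        have "emeasure lborel ({0..1} \<inter> I y) \<le> emeasure lborel {0..1::real}"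
          by (rule emeasure_mono) auto
        then show ?thesis by (auto simp: top_unique)
      qed
      have b: "emeasure (uniform_measure lborel {0..1::real}) (I y) = ennreal (measure lborel ({0..1} \<inter> I y))"
        using y I fl by (simp add: emeasure_eq_ennreal_measure)
      show ?thesis using a b by simp
    qed
    finally show "measure (Dm q) ({y} \<times> I y) = measure lborel ({0..1} \<inter> I y) / q"
      by (simp add: D.emeasure_eq_measure ennreal_mult'[symmetric])
  qed
  also have "\<dots> = (\<Sum>y\<in>Y. measure lborel ({0..1} \<inter> I y)) / q"
    by (simp add: sum_divide_distrib)
  finally show ?thesis .
qed

lemma cyl_sets:
  assumes "\<And>k. k < n \<Longrightarrow> S k \<in> sets (Dm q)"
  shows "{r\<in>space (seed_space q). \<forall>k<n. r k \<in> S k} \<in> sets (seed_space q)"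
proof -
  have "{r\<in>space (seed_space q). \<forall>k<n. r k \<in> S k} = prod_emb UNIV (\<lambda>_. Dm q) {..<n} (Pi\<^sub>E {..<n} S)"
    by (auto simp: prod_emb_def seed_space_Dm space_PiM)
  also have "\<dots> \<in> sets (seed_space q)" unfolding seed_space_Dm
    using assms by (intro sets_PiM_I) auto
  finally show ?thesis .
qed

lemma measure_cyl:
  assumes q: "q \<ge> 1" and S: "\<And>k. k < n \<Longrightarrow> S k \<in> sets (Dm q)"
  shows "measure (seed_space q) {r\<in>space (seed_space q). \<forall>k<n. r k \<in> S k} = (\<Prod>k<n. measure (Dm q) (S k))"
proof -
  interpret P: product_prob_space "\<lambda>_. Dm q" UNIV using pps[OF q] .
  have "{r\<in>space (seed_space q). \<forall>k<n. r k \<in> S k} = prod_emb UNIV (\<lambda>_. Dm q) {..<n} (Pi\<^sub>E {..<n} S)"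
    by (auto simp: prod_emb_def seed_space_Dm space_PiM)
  then show ?thesis unfolding seed_space_Dm
    using P.measure_PiM_emb[of "{..<n}" S] S by simp
qed

lemma fstD: "fst \<in> measurable (Dm q) (count_space UNIV)"
proof -
  have "fst \<in> measurable (Dm q) (uniform_count_measure {1..q})"
    unfolding Dm_def by (rule measurable_fst)
  moreover have "(\<lambda>x. x) \<in> measurable (uniform_count_measure {1..q}) (count_space UNIV)"
    by (subst measurable_cong_sets[OF sets_uniform_count_measure_count_space refl]) (rule measurable_count_space)
  ultimately show ?thesis by (rule measurable_compose)
qed

lemma nufstD: "(\<lambda>z. (\<nu>::nat\<Rightarrow>real) (fst z)) \<in> borel_measurable (Dm q)"
proof -
  have "fst \<in> measurable (Dm q) (uniform_count_measure {1..q})"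
    unfolding Dm_def by (rule measurable_fst)
  moreover have "\<nu> \<in> measurable (uniform_count_measure {1..q}) borel"
    by (subst measurable_cong_sets[OF sets_uniform_count_measure_count_space refl]) simp
  ultimately show ?thesis by (rule measurable_compose)
qed

lemma sndD: "snd \<in> borel_measurable (Dm q)"
proof -
  have "snd \<in> measurable (Dm q) (uniform_measure lborel {0..1::real})"
    unfolding Dm_def by (rule measurable_snd)
  moreover have "(\<lambda>x. x) \<in> measurable (uniform_measure lborel {0..1::real}) borel"
    by (rule measurable_ident_sets) simp
  ultimately show ?thesis by (rule measurable_compose)
qed

lemma predD: "(\<lambda>z. snd z \<le> (\<nu>::nat\<Rightarrow>real) (fst z)) \<in> measurable (Dm q) (count_space UNIV)"
proof -
  note [measurable] = sndD nufstD
  show ?thesis by measurable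
qed

lemma compD: "(\<lambda>r. r k) \<in> measurable (seed_space q) (Dm q)"
  unfolding seed_space_Dm by (rule measurable_component_singleton) simp

lemma istar_meas: "istar \<nu> \<in> measurable (seed_space q) (count_space UNIV)"
  unfolding istar_def
  by (rule measurable_Least, rule measurable_compose[OF compD predD])

lemma MinCoupler_meas: "MinCoupler \<nu> \<in> measurable (seed_space q) (count_space UNIV)"
  unfolding MinCoupler_def
  by (rule measurable_compose_countable'[where f="\<lambda>i r. fst (r i)" and g="istar \<nu>" and I=UNIV])
    (auto intro: measurable_compose[OF compD fstD] istar_meas)

lemma sets_R: "Rset \<mu> \<delta> \<inter> space (seed_space q) \<in> sets (seed_space q)"
proof -
  have f: "(\<lambda>r. snd (r (istar \<mu> r))) \<in> borel_measurable (seed_space q)"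
    by (rule measurable_compose_countable'[where f="\<lambda>i r. snd (r i)" and g="istar \<mu>" and I=UNIV])
      (rule measurable_compose[OF compD sndD], rule istar_meas, simp)
  have g: "(\<lambda>r. \<mu> (fst (r (istar \<mu> r)))) \<in> borel_measurable (seed_space q)"
    by (rule measurable_compose_countable'[where f="\<lambda>i r. \<mu> (fst (r i))" and g="istar \<mu>" and I=UNIV])
      (rule measurable_compose[OF compD nufstD], rule istar_meas, simp)
  have g': "(\<lambda>r. (1 - \<delta>) * \<mu> (fst (r (istar \<mu> r)))) \<in> borel_measurable (seed_space q)"
    by (rule borel_measurable_times[OF measurable_const g]) simp
  have "Rset \<mu> \<delta> \<inter> space (seed_space q) =
    {r \<in> space (seed_space q). (1 - \<delta>) * \<mu> (fst (r (istar \<mu> r))) \<le> snd (r (istar \<mu> r))}"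
    by (auto simp: Rset_def)
  also have "\<dots> \<in> sets (seed_space q)" by (rule borel_measurable_le[OF g' f])
  finally show ?thesis .
qed

lemma sets_AR: "{r. MinCoupler \<mu> r \<noteq> MinCoupler \<upsilon> r} \<inter> Rset \<mu> \<delta> \<inter> space (seed_space q) \<in> sets (seed_space q)"
proof -
  note [measurable] = MinCoupler_meas
  have "{r \<in> space (seed_space q). MinCoupler \<mu> r \<noteq> MinCoupler \<upsilon> r} \<in> sets (seed_space q)"
    by measurable
  then have "{r \<in> space (seed_space q). MinCoupler \<mu> r \<noteq> MinCoupler \<upsilon> r} \<inter> (Rset \<mu> \<delta> \<inter> space (seed_space q)) \<in> sets (seed_space q)"
    using sets_R by blast
  moreover have "{r \<in> space (seed_space q). MinCoupler \<mu> r \<noteq> MinCoupler \<upsilon> r} \<inter> (Rset \<mu> \<delta> \<inter> space (seed_space q)) = {r. MinCoupler \<mu> r \<noteq> MinCoupler \<upsilon> r} \<inter> Rset \<mu> \<delta> \<inter> space (seed_space q)"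
    by blast
  ultimately show ?thesis by simp
qed


lemma m_Ioi: "0 \<le> m \<Longrightarrow> m \<le> 1 \<Longrightarrow> measure lborel ({0..1} \<inter> {m<..}) = 1 - (m::real)"
proof -
  assume "0 \<le> m" "m \<le> 1"
  then have "{0..1} \<inter> {m<..} = {m<..1}" by auto
  then show ?thesis using \<open>m \<le> 1\<close> by simp
qed

lemma m_Icc: "0 \<le> a \<Longrightarrow> a \<le> b \<Longrightarrow> b \<le> 1 \<Longrightarrow> measure lborel ({0..1} \<inter> {a..b}) = b - (a::real)"
proof -
  assume "0 \<le> a" "a \<le> b" "b \<le> 1"
  then have "{0..1} \<inter> {a..b} = {a..b}" by auto
  then show ?thesis using \<open>a \<le> b\<close> by simp
qed

lemma m_Iic: "0 \<le> v \<Longrightarrow> v \<le> 1 \<Longrightarrow> measure lborel ({0..1} \<inter> {..v}) = (v::real)"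
proof -
  assume "0 \<le> v" "v \<le> 1"
  then have "{0..1} \<inter> {..v} = {0..v}" by auto
  then show ?thesis using \<open>0 \<le> v\<close> by simp
qed

lemma prod_split: "(\<Prod>k<a+b. f k) = (\<Prod>k<a. f k) * (\<Prod>k<b. f (a+k::nat))"
  by (induction b) (auto simp: mult.assoc)

locale setting =
  fixes q :: nat and \<mu> \<upsilon> :: "nat \<Rightarrow> real" and \<delta> :: real
  assumes q1: "q \<ge> 1"
    and mu0: "\<And>y. y \<in> {1..q} \<Longrightarrow> 0 \<le> \<mu> y" and mus: "(\<Sum>y\<in>{1..q}. \<mu> y) = 1"
    and nu0: "\<And>y. y \<in> {1..q} \<Longrightarrow> 0 \<le> \<upsilon> y" and nus: "(\<Sum>y\<in>{1..q}. \<upsilon> y) = 1"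
    and d0: "0 < \<delta>" and d1: "\<delta> \<le> 1"
begin

lemma mu1: "y \<in> {1..q} \<Longrightarrow> \<mu> y \<le> 1"
  using member_le_sum[of y "{1..q}" \<mu>] mu0 mus by auto

lemma nu1: "y \<in> {1..q} \<Longrightarrow> \<upsilon> y \<le> 1"
  using member_le_sum[of y "{1..q}" \<upsilon>] nu0 nus by auto

definition "BR = (\<Union>y\<in>{1..q}. {y} \<times> {max (\<mu> y) (\<upsilon> y)<..})"
definition "VR = (\<Union>y\<in>{1..q}. {y} \<times> {\<upsilon> y<..})"
definition "MR = (\<Union>y\<in>{1..q}. {y} \<times> {\<mu> y<..})"
definition "G x = (\<Union>y\<in>{x}. {y} \<times> {(1-\<delta>) * \<mu> y..\<mu> y})"
definition "VA x = (\<Union>y\<in>{1..q}-{x}. {y} \<times> {..\<upsilon> y})"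
definition "MG = (\<Union>y\<in>{1..q}. {y} \<times> {(1-\<delta>) * \<mu> y..\<mu> y})"

lemma sets_coord: "BR \<in> sets (Dm q)" "VR \<in> sets (Dm q)" "MR \<in> sets (Dm q)"
   "x \<in> {1..q} \<Longrightarrow> G x \<in> sets (Dm q)" "VA x \<in> sets (Dm q)" "MG \<in> sets (Dm q)"
  unfolding BR_def VR_def MR_def VA_def MG_def
  apply (auto intro!: SigmaI_sets)
  unfolding G_def by (rule SigmaI_sets) auto

lemma mIccG: "y \<in> {1..q} \<Longrightarrow> measure lborel ({0..1} \<inter> {(1-\<delta>) * \<mu> y..\<mu> y}) = \<delta> * \<mu> y"
proof -
  assume y: "y \<in> {1..q}"
  have a: "0 \<le> (1-\<delta>) * \<mu> y" using d1 mu0[OF y] by simp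
  have b: "(1-\<delta>) * \<mu> y \<le> \<mu> y" using d0 mu0[OF y] by (simp add: mult_le_cancel_right1 algebra_simps)
  show ?thesis using m_Icc[OF a b mu1[OF y]] by (simp add: algebra_simps)
qed

definition "bb = (\<Sum>y\<in>{1..q}. 1 - max (\<mu> y) (\<upsilon> y)) / q"

lemma m_BR: "measure (Dm q) BR = bb"
  unfolding BR_def bb_def
  by (subst measure_Sigma[OF q1]) (auto intro!: sum.cong m_Ioi simp: mu0 nu0 mu1 nu1 le_max_iff_disj)

lemma m_VR: "measure (Dm q) VR = (q - 1) / q"
proof -
  have "measure (Dm q) VR = (\<Sum>y\<in>{1..q}. 1 - \<upsilon> y) / q"
    unfolding VR_def
    by (subst measure_Sigma[OF q1]) (auto intro!: sum.cong m_Ioi simp: nu0 nu1)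
  also have "\<dots> = (q - 1) / q" using nus q1 by (simp add: sum_subtractf of_nat_diff)
  finally show ?thesis .
qed

lemma m_MR: "measure (Dm q) MR = (q - 1) / q"
proof -
  have "measure (Dm q) MR = (\<Sum>y\<in>{1..q}. 1 - \<mu> y) / q"
    unfolding MR_def
    by (subst measure_Sigma[OF q1]) (auto intro!: sum.cong m_Ioi simp: mu0 mu1)
  also have "\<dots> = (q - 1) / q" using mus q1 by (simp add: sum_subtractf of_nat_diff)
  finally show ?thesis .
qed

lemma m_G: "x \<in> {1..q} \<Longrightarrow> measure (Dm q) (G x) = \<delta> * \<mu> x / q"
proof -
  assume x: "x \<in> {1..q}"
  have "measure (Dm q) (G x) = (\<Sum>y\<in>{x}. measure lborel ({0..1} \<inter> {(1-\<delta>) * \<mu> y..\<mu> y})) / q"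
    unfolding G_def by (rule measure_Sigma[OF q1]) (use x in auto)
  also have "\<dots> = (\<Sum>y\<in>{x}. \<delta> * \<mu> y) / q"
    by (intro arg_cong[where f="\<lambda>s. s/q"] sum.cong refl mIccG) (use x in auto)
  finally show ?thesis by simp
qed

lemma m_MG: "measure (Dm q) MG = \<delta> / q"
proof -
  have "measure (Dm q) MG = (\<Sum>y\<in>{1..q}. measure lborel ({0..1} \<inter> {(1-\<delta>) * \<mu> y..\<mu> y})) / q"
    unfolding MG_def by (rule measure_Sigma[OF q1]) auto
  also have "\<dots> = (\<Sum>y\<in>{1..q}. \<delta> * \<mu> y) / q"
    by (intro arg_cong[where f="\<lambda>s. s/q"] sum.cong refl mIccG) auto
  also have "\<dots> = \<delta> / q" using mus by (simp add: sum_distrib_left[symmetric])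
  finally show ?thesis .
qed

lemma m_VA: "x \<in> {1..q} \<Longrightarrow> measure (Dm q) (VA x) = (1 - \<upsilon> x) / q"
proof -
  assume x: "x \<in> {1..q}"
  have "measure (Dm q) (VA x) = (\<Sum>y\<in>{1..q}-{x}. \<upsilon> y) / q"
    unfolding VA_def
    by (subst measure_Sigma[OF q1]) (auto intro!: sum.cong simp: m_Iic nu0 nu1)
  also have "\<dots> = (1 - \<upsilon> x) / q" using nus x by (simp add: sum_diff1)
  finally show ?thesis .
qed

definition "SE x i d k = (if k < i then BR else if k = i then G x else if k \<le> i + d then VR else VA x)"
definition "E x i d = {r \<in> space (seed_space q). \<forall>k<i+d+2. r k \<in> SE x i d k}"

lemma sets_E: "x \<in> {1..q} \<Longrightarrow> E x i d \<in> sets (seed_space q)"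
  unfolding E_def by (rule cyl_sets) (auto simp: SE_def sets_coord)

lemma m_E: assumes x: "x \<in> {1..q}"
  shows "measure (seed_space q) (E x i d) = bb ^ i * (\<delta> * \<mu> x / q) * ((q-1)/q) ^ d * ((1 - \<upsilon> x) / q)"
proof -
  have c0: "measure (seed_space q) (E x i d) = (\<Prod>k<i+(d+2). measure (Dm q) (SE x i d k))"
    unfolding E_def using x by (subst measure_cyl[OF q1]) (auto simp: SE_def sets_coord)
  have c1: "(\<Prod>k<i+(d+2). measure (Dm q) (SE x i d k)) = (\<Prod>k<i. measure (Dm q) (SE x i d k)) * (\<Prod>k<d+2. measure (Dm q) (SE x i d (i+k)))"
    by (rule prod_split)
  have c2: "(\<Prod>k<i. measure (Dm q) (SE x i d k)) = bb ^ i"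
    by (simp add: SE_def m_BR)
  have c3: "(\<Prod>k<d+2. measure (Dm q) (SE x i d (i+k))) = (\<delta> * \<mu> x / q) * ((q-1)/q) ^ d * ((1 - \<upsilon> x) / q)"
  proof -
    have e1: "(\<Prod>k<Suc (Suc d). measure (Dm q) (SE x i d (i+k))) = 
       measure (Dm q) (SE x i d i) * ((\<Prod>k<d. measure (Dm q) (SE x i d (i+Suc k))) * measure (Dm q) (SE x i d (i + Suc d)))"
      by (subst prod.lessThan_Suc, subst prod.lessThan_Suc_shift) (simp add: mult.assoc)
    have e2: "(\<Prod>k<d. measure (Dm q) (SE x i d (Suc (i+k)))) = ((q-1)/q) ^ d"
      by (simp add: SE_def m_VR)
    have e3: "SE x i d i = G x" "SE x i d (Suc (i + d)) = VA x" by (auto simp: SE_def)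
    show ?thesis unfolding numeral_2_eq_2 add_Suc_right add_0_right e1 using x by (simp add: e2 e3 m_G m_VA)
  qed
  show ?thesis by (simp only: c0 c1 c2 c3 mult.assoc)
qed

lemma E_char:
  assumes x: "x \<in> {1..q}" and bad: "\<upsilon> x < (1-\<delta>) * \<mu> x" and r: "r \<in> E x i d"
  shows "istar \<mu> r = i" "fst (r i) = x" "istar \<upsilon> r = i + d + 1"
    "MinCoupler \<mu> r \<noteq> MinCoupler \<upsilon> r" "r \<in> Rset \<mu> \<delta>"
proof -
  have rk: "\<And>k. k < i+d+2 \<Longrightarrow> r k \<in> SE x i d k" using r by (auto simp: E_def)
  have pre: "snd (r k) > \<mu> (fst (r k)) \<and> snd (r k) > \<upsilon> (fst (r k))" if "k < i" for k
    using rk[of k] that by (auto simp: SE_def BR_def)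
  have ri: "fst (r i) = x" "(1-\<delta>) * \<mu> x \<le> snd (r i)" "snd (r i) \<le> \<mu> x"
    using rk[of i] by (auto simp: SE_def G_def)
  have mid: "snd (r k) > \<upsilon> (fst (r k))" if "i < k" "k \<le> i + d" for k
    using rk[of k] that by (auto simp: SE_def VR_def)
  have last: "fst (r (i+d+1)) \<noteq> x" "snd (r (i+d+1)) \<le> \<upsilon> (fst (r (i+d+1)))"
    using rk[of "i+d+1"] by (auto simp: SE_def VA_def)
  show i1: "istar \<mu> r = i" unfolding istar_def
    by (rule Least_equality) (use ri pre in \<open>auto simp: not_le[symmetric]\<close>)
  show "fst (r i) = x" by (rule ri)
  show i2: "istar \<upsilon> r = i + d + 1" unfolding istar_def
  proof (rule Least_equality)
    show "snd (r (i + d + 1)) \<le> \<upsilon> (fst (r (i + d + 1)))" by (rule last(2))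
    fix k assume k: "snd (r k) \<le> \<upsilon> (fst (r k))"
    show "i + d + 1 \<le> k"
    proof (rule ccontr)
      assume "\<not> i + d + 1 \<le> k"
      then consider "k < i" | "k = i" | "i < k" "k \<le> i + d" by linarith
      then show False
      proof cases
        case 1 then show False using pre[of k] k by auto
      next
        case 2 then show False using ri bad k by auto
      next
        case 3 then show False using mid[of k] k by auto
      qed
    qed
  qed
  show "MinCoupler \<mu> r \<noteq> MinCoupler \<upsilon> r"
    unfolding MinCoupler_def i1 i2 using ri last by auto
  show "r \<in> Rset \<mu> \<delta>" unfolding Rset_def using i1 ri by auto
qed

lemma ps: "prob_space (seed_space q)"
  unfolding seed_space_Dm by (rule prob_space_PiM) (rule prob_Dm[OF q1])

definition "F i = {r \<in> space (seed_space q). \<forall>k<i+1. r k \<in> (if k < i then MR else MG)}"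
definition "C M = {r \<in> space (seed_space q). \<forall>k<M. r k \<in> MR}"

lemma sp_coord: "r \<in> space (seed_space q) \<Longrightarrow> fst (r k) \<in> {1..q}"
  by (auto simp: seed_space_Dm space_PiM space_Dm PiE_def Pi_def mem_Times_iff)

lemma R_sub: "Rset \<mu> \<delta> \<inter> space (seed_space q) \<subseteq> (\<Union>i<M. F i) \<union> C M"
proof
  fix r assume r: "r \<in> Rset \<mu> \<delta> \<inter> space (seed_space q)"
  have sp: "r \<in> space (seed_space q)" using r by auto
  show "r \<in> (\<Union>i<M. F i) \<union> C M"
  proof (cases "\<exists>k<M. snd (r k) \<le> \<mu> (fst (r k))")
    case True
    then obtain k where k: "k < M" "snd (r k) \<le> \<mu> (fst (r k))" by auto
    define i where "i = istar \<mu> r"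
    have ik: "i \<le> k" unfolding i_def istar_def by (rule Least_le) (rule k(2))
    have Pi: "snd (r i) \<le> \<mu> (fst (r i))" unfolding i_def istar_def by (rule LeastI) (rule k(2))
    have nP: "\<not> snd (r k') \<le> \<mu> (fst (r k'))" if "k' < i" for k'
      using not_less_Least[of k' "\<lambda>k. snd (r k) \<le> \<mu> (fst (r k))"] that unfolding i_def istar_def by blast
    have Ri: "(1 - \<delta>) * \<mu> (fst (r i)) \<le> snd (r i)" using r unfolding Rset_def i_def by auto
    have "r \<in> F i"
      unfolding F_def using sp Pi nP Ri sp_coord[OF sp]
      by (auto simp: MR_def MG_def less_Suc_eq not_le mem_Times_iff intro!: bexI[of _ "fst (r _)"] 
        split: if_splits)
    then show ?thesis using ik k(1) by auto
  next
    case False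
    then have "r \<in> C M" unfolding C_def using sp sp_coord[OF sp]
      by (auto simp: MR_def not_le mem_Times_iff intro!: bexI[of _ "fst (r _)"])
    then show ?thesis by auto
  qed
qed

definition "cc = real (q - 1) / real q"

lemma cc: "0 \<le> cc" "cc < 1" "1 - cc = 1 / q"
  using q1 by (auto simp: cc_def of_nat_diff field_simps)

lemma m_VR': "measure (Dm q) VR = cc" using m_VR by (simp add: cc_def)
lemma m_MR': "measure (Dm q) MR = cc" using m_MR by (simp add: cc_def)

lemma sets_F: "F i \<in> sets (seed_space q)"
  unfolding F_def by (rule cyl_sets) (auto simp: sets_coord)
lemma sets_C: "C M \<in> sets (seed_space q)"
  unfolding C_def by (rule cyl_sets) (auto simp: sets_coord)

lemma m_F: "measure (seed_space q) (F i) = cc ^ i * (\<delta> / q)"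
proof -
  have "measure (seed_space q) (F i) = (\<Prod>k<Suc i. measure (Dm q) (if k < i then MR else MG))"
    unfolding F_def by (subst measure_cyl[OF q1]) (auto simp: sets_coord)
  also have "\<dots> = cc ^ i * (\<delta> / q)"
    by (subst prod.lessThan_Suc) (simp add: m_MR' m_MG)
  finally show ?thesis .
qed

lemma m_C: "measure (seed_space q) (C M) = cc ^ M"
  unfolding C_def by (subst measure_cyl[OF q1]) (auto simp: sets_coord m_MR')

lemma R_le: "measure (seed_space q) (Rset \<mu> \<delta> \<inter> space (seed_space q)) \<le> \<delta>"
proof -
  interpret P: prob_space "seed_space q" by (rule ps)
  have b: "measure (seed_space q) (Rset \<mu> \<delta> \<inter> space (seed_space q)) \<le> \<delta> + cc ^ M" for M
  proof -
    have "measure (seed_space q) (Rset \<mu> \<delta> \<inter> space (seed_space q)) \<le> measure (seed_space q) ((\<Union>i<M. F i) \<union> C M)"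
      by (rule P.finite_measure_mono[OF R_sub]) (auto intro!: sets_F sets_C)
    also have "\<dots> \<le> measure (seed_space q) (\<Union>i<M. F i) + measure (seed_space q) (C M)"
      by (rule measure_Un_le) (auto intro!: sets_F sets_C)
    also have "\<dots> \<le> (\<Sum>i<M. measure (seed_space q) (F i)) + measure (seed_space q) (C M)"
      using measure_UNION_le[of "{..<M}" F "seed_space q"] sets_F by auto
    also have "\<dots> = (\<Sum>i<M. cc ^ i) * (\<delta> / q) + cc ^ M"
      by (simp add: m_F m_C sum_distrib_right[symmetric] sum_divide_distrib[symmetric])
    also have "(\<Sum>i<M. cc ^ i) = (1 - cc ^ M) * q"
      using cc by (simp add: sum_gp_strict)
    also have "(1 - cc ^ M) * q * (\<delta> / q) + cc ^ M \<le> \<delta> + cc ^ M"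
      using q1 d0 cc by (simp add: field_simps)
    finally show ?thesis .
  qed
  have "(\<lambda>M. \<delta> + cc ^ M) \<longlonglongrightarrow> \<delta> + 0"
    by (intro tendsto_add tendsto_const LIMSEQ_power_zero) (use cc in auto)
  then show ?thesis using b by (intro LIMSEQ_le_const[of "\<lambda>M. \<delta> + cc ^ M"]) auto
qed

definition "Bad = {x\<in>{1..q}. \<upsilon> x < (1 - \<delta>) * \<mu> x}"
definition "ARs = {r. MinCoupler \<mu> r \<noteq> MinCoupler \<upsilon> r} \<inter> Rset \<mu> \<delta> \<inter> space (seed_space q)"

lemma smax: "1 \<le> (\<Sum>y\<in>{1..q}. max (\<mu> y) (\<upsilon> y))" "(\<Sum>y\<in>{1..q}. max (\<mu> y) (\<upsilon> y)) \<le> 2"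
proof -
  have "(\<Sum>y\<in>{1..q}. \<mu> y) \<le> (\<Sum>y\<in>{1..q}. max (\<mu> y) (\<upsilon> y))" by (rule sum_mono) auto
  then show "1 \<le> (\<Sum>y\<in>{1..q}. max (\<mu> y) (\<upsilon> y))" using mus by simp
  have "(\<Sum>y\<in>{1..q}. max (\<mu> y) (\<upsilon> y)) \<le> (\<Sum>y\<in>{1..q}. \<mu> y + \<upsilon> y)"
    by (rule sum_mono) (use mu0 nu0 in fastforce)
  then show "(\<Sum>y\<in>{1..q}. max (\<mu> y) (\<upsilon> y)) \<le> 2" using mus nus by (simp add: sum.distrib)
qed

lemma bb: "0 \<le> bb" "bb < 1" "1 - bb = (\<Sum>y\<in>{1..q}. max (\<mu> y) (\<upsilon> y)) / q"
proof -
  have "0 \<le> (\<Sum>y\<in>{1..q}. 1 - max (\<mu> y) (\<upsilon> y))"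
    by (rule sum_nonneg) (use mu1 nu1 in auto)
  then show "0 \<le> bb" unfolding bb_def by simp
  have e: "(\<Sum>y\<in>{1..q}. 1 - max (\<mu> y) (\<upsilon> y)) = q - (\<Sum>y\<in>{1..q}. max (\<mu> y) (\<upsilon> y))"
    by (simp add: sum_subtractf)
  show "1 - bb = (\<Sum>y\<in>{1..q}. max (\<mu> y) (\<upsilon> y)) / q"
    unfolding bb_def e using q1 by (simp add: field_simps)
  then show "bb < 1" using smax q1 by (smt (verit) divide_pos_pos of_nat_0_less_iff le_numeral_extra(2) less_le_trans zero_less_one)
qed

lemma E_sub: "x \<in> Bad \<Longrightarrow> E x i d \<subseteq> ARs"
  using E_char[of x r i d for r] unfolding ARs_def Bad_def by (auto simp: E_def)

lemma AR_N: "measure (seed_space q) ARs \<ge>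
   (\<Sum>x\<in>Bad. (\<delta> * \<mu> x / q) * ((1 - \<upsilon> x) / q)) * (\<Sum>i<N. bb ^ i) * (\<Sum>d<N. cc ^ d)"
proof -
  interpret P: prob_space "seed_space q" by (rule ps)
  let ?I = "Bad \<times> ({..<N} \<times> {..<N})"
  define Ef where "Ef = (\<lambda>p. E (fst p) (fst (snd p)) (snd (snd p)))"
  have fin: "finite Bad" unfolding Bad_def by auto
  have Bq: "x \<in> Bad \<Longrightarrow> x \<in> {1..q}" for x unfolding Bad_def by auto
  have "measure (seed_space q) (\<Union>p\<in>?I. Ef p) = (\<Sum>p\<in>?I. measure (seed_space q) (Ef p))"
  proof (rule measure_finite_Union)
    show "finite ?I" using fin by auto
    show "Ef ` ?I \<subseteq> sets (seed_space q)" using sets_E Bq by (auto simp: Ef_def)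
    show "disjoint_family_on Ef ?I"
    proof (unfold disjoint_family_on_def, intro ballI impI)
      fix p p' assume pp: "p \<in> ?I" "p' \<in> ?I" "p \<noteq> p'"
      obtain x i d where p: "p = (x,i,d)" by (cases p) auto
      obtain x' i' d' where p': "p' = (x',i',d')" by (cases p') auto
      show "Ef p \<inter> Ef p' = {}"
      proof (rule ccontr)
        assume "Ef p \<inter> Ef p' \<noteq> {}"
        then obtain r where a: "r \<in> E x i d" "r \<in> E x' i' d'" unfolding Ef_def p p' by auto
        have xb: "x \<in> Bad" "x' \<in> Bad" using pp p p' by auto
        have "istar \<mu> r = i" "fst (r i) = x" "istar \<upsilon> r = i + d + 1"
          using E_char[of x r i d] a xb unfolding Bad_def by auto
        moreover have "istar \<mu> r = i'" "fst (r i') = x'" "istar \<upsilon> r = i' + d' + 1"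
          using E_char[of x' r i' d'] a xb unfolding Bad_def by auto
        ultimately show False using pp(3) p p' by auto
      qed
    qed
    show "emeasure (seed_space q) (Ef p) \<noteq> \<infinity>" for p by simp
  qed
  also have "(\<Sum>p\<in>?I. measure (seed_space q) (Ef p)) =
      (\<Sum>(x,i,d)\<in>?I. (\<delta> * \<mu> x / q) * ((1 - \<upsilon> x) / q) * bb ^ i * cc ^ d)"
    by (intro sum.cong refl) (auto simp: Ef_def m_E[OF Bq] cc_def)
  also have "\<dots> = (\<Sum>x\<in>Bad. (\<delta> * \<mu> x / q) * ((1 - \<upsilon> x) / q)) * (\<Sum>i<N. bb ^ i) * (\<Sum>d<N. cc ^ d)"
    by (simp add: sum.cartesian_product[symmetric] sum_product sum_distrib_left sum_distrib_right sum_divide_distrib mult_ac)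
  finally have eq: "measure (seed_space q) (\<Union>p\<in>?I. Ef p) = (\<Sum>x\<in>Bad. (\<delta> * \<mu> x / q) * ((1 - \<upsilon> x) / q)) * (\<Sum>i<N. bb ^ i) * (\<Sum>d<N. cc ^ d)" .
  have "measure (seed_space q) (\<Union>p\<in>?I. Ef p) \<le> measure (seed_space q) ARs"
  proof (rule P.finite_measure_mono)
    show "ARs \<in> sets (seed_space q)" unfolding ARs_def by (rule sets_AR)
    show "(\<Union>p\<in>?I. Ef p) \<subseteq> ARs" using E_sub unfolding Ef_def by fastforce
  qed
  then show ?thesis using eq by simp
qed

lemma AR_ge: "measure (seed_space q) ARs \<ge> (\<Sum>x\<in>Bad. \<delta> * \<mu> x * (1 - \<upsilon> x)) / 2"
proof -
  define K where "K = (\<Sum>x\<in>Bad. (\<delta> * \<mu> x / q) * ((1 - \<upsilon> x) / q))"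
  define T where "T = (\<Sum>x\<in>Bad. \<delta> * \<mu> x * (1 - \<upsilon> x))"
  define Sm where "Sm = (\<Sum>y\<in>{1..q}. max (\<mu> y) (\<upsilon> y))"
  have Bq: "x \<in> Bad \<Longrightarrow> x \<in> {1..q}" for x unfolding Bad_def by auto
  have T0: "0 \<le> T" unfolding T_def
    by (rule sum_nonneg) (use Bq mu0 nu1 d0 in \<open>auto intro!: mult_nonneg_nonneg\<close>)
  have KT: "K = T / (q * q)" unfolding K_def T_def by (simp add: sum_divide_distrib)
  have lim: "(\<lambda>N. K * (\<Sum>i<N. bb ^ i) * (\<Sum>d<N. cc ^ d)) \<longlonglongrightarrow> K * (1 / (1 - bb)) * (1 / (1 - cc))"
  proof (intro tendsto_mult tendsto_const)
    show "(\<lambda>N. \<Sum>i<N. bb ^ i) \<longlonglongrightarrow> 1 / (1 - bb)"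
      using geometric_sums[of bb] bb by (auto simp: sums_def)
    show "(\<lambda>N. \<Sum>i<N. cc ^ i) \<longlonglongrightarrow> 1 / (1 - cc)"
      using geometric_sums[of cc] cc by (auto simp: sums_def)
  qed
  have le: "K * (1 / (1 - bb)) * (1 / (1 - cc)) \<le> measure (seed_space q) ARs"
    by (rule LIMSEQ_le_const2[OF lim]) (use AR_N in \<open>auto simp: K_def\<close>)
  have Sm: "1 \<le> Sm" "Sm \<le> 2" using smax unfolding Sm_def by auto
  have "K * (1 / (1 - bb)) * (1 / (1 - cc)) = T / Sm"
    unfolding KT bb(3) cc(3) Sm_def[symmetric] using q1 Sm by (simp add: field_simps)
  moreover have "T / 2 \<le> T / Sm" using T0 Sm by (intro divide_left_mono) auto
  ultimately show ?thesis using le unfolding T_def by linarith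
qed

end

theorem lemma6p2:
  fixes q :: nat and \<mu> \<upsilon> :: "nat \<Rightarrow> real" and \<delta> :: real
  assumes "in_simplex q \<mu>" and "in_simplex q \<upsilon>"
    and "0 < \<delta>" and "\<delta> \<le> 1"
  shows "cond_prob (seed_space q) {r. MinCoupler \<mu> r \<noteq> MinCoupler \<upsilon> r} (Rset \<mu> \<delta>)
         \<ge> (1 - Max (\<upsilon> ` {1..q})) / 2 * (\<Sum>x\<in>{x\<in>{1..q}. \<upsilon> x < (1 - \<delta>) * \<mu> x}. \<mu> x)"
proof -
  have q1: "q \<ge> 1"
  proof (rule ccontr)
    assume "\<not> q \<ge> 1" then have "q = 0" by simp
    then show False using assms(1) by (simp add: in_simplex_def)
  qed
  interpret setting q \<mu> \<upsilon> \<delta>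
    using assms q1 by unfold_locales (auto simp: in_simplex_def)
  define vm where "vm = Max (\<upsilon> ` {1..q})"
  define X where "X = (1 - vm) / 2 * (\<Sum>x\<in>Bad. \<mu> x)"
  have ne: "\<upsilon> ` {1..q} \<noteq> {}" using q1 by auto
  have vm1: "vm \<le> 1" unfolding vm_def using ne nu1 by (subst Max_le_iff) auto
  have vmx: "x \<in> {1..q} \<Longrightarrow> \<upsilon> x \<le> vm" for x unfolding vm_def by (rule Max_ge) auto
  have Bq: "x \<in> Bad \<Longrightarrow> x \<in> {1..q}" for x unfolding Bad_def by auto
  have X0: "0 \<le> X" unfolding X_def using vm1 by (intro mult_nonneg_nonneg sum_nonneg) (auto intro: mu0 Bq)
  have "\<delta> * X \<le> (\<Sum>x\<in>Bad. \<delta> * \<mu> x * (1 - \<upsilon> x)) / 2"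
  proof -
    have "\<delta> * X = (\<Sum>x\<in>Bad. \<delta> * \<mu> x * (1 - vm)) / 2"
      unfolding X_def by (simp add: sum_distrib_left sum_distrib_right sum_divide_distrib mult_ac)
    also have "\<dots> \<le> (\<Sum>x\<in>Bad. \<delta> * \<mu> x * (1 - \<upsilon> x)) / 2"
      by (intro divide_right_mono sum_mono mult_left_mono) (use d0 mu0 Bq vmx in auto)
    finally show ?thesis .
  qed
  with AR_ge have A: "\<delta> * X \<le> measure (seed_space q) ARs" by linarith
  interpret P: prob_space "seed_space q" by (rule ps)
  have AR_le: "measure (seed_space q) ARs \<le> measure (seed_space q) (Rset \<mu> \<delta> \<inter> space (seed_space q))"
    by (rule P.finite_measure_mono[OF _ sets_R]) (auto simp: ARs_def)
  have "X \<le> measure (seed_space q) ARs / measure (seed_space q) (Rset \<mu> \<delta> \<inter> space (seed_space q))"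
  proof (cases "measure (seed_space q) (Rset \<mu> \<delta> \<inter> space (seed_space q)) = 0")
    case True
    then have "\<delta> * X \<le> 0" using A AR_le by linarith
    then have "X = 0" using X0 d0 by (simp add: mult_le_0_iff)
    then show ?thesis by simp
  next
    case False
    then have pos: "0 < measure (seed_space q) (Rset \<mu> \<delta> \<inter> space (seed_space q))"
      using measure_nonneg[of "seed_space q"] by (simp add: order.not_eq_order_implies_strict)
    have "X \<le> measure (seed_space q) ARs / \<delta>" using A d0 by (simp add: field_simps)
    also have "\<dots> \<le> measure (seed_space q) ARs / measure (seed_space q) (Rset \<mu> \<delta> \<inter> space (seed_space q))"
      by (rule divide_left_mono) (use R_le pos d0 in auto)
    finally show ?thesis .
  qed
  then show ?thesis unfolding cond_prob_def X_def vm_def Bad_def ARs_def .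
qed

end
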